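(* Let $\mathcal{K}$ be a 2-category and $\mathcal{H}$ a class of 1-cells of $\mathcal{K}$ each of which is a corepresentable surjection. If $X,Y$ are right Kan injective with respect to all maps in $\mathcal{H}$, then every 1-cell $g:X\to Y$ preserves right Kan extensions along all maps in $\mathcal{H}$; and similarly, if $X,Y$ are left Kan injective with respect to all maps in $\mathcal{H}$, every 1-cell $X\to Y$ preserves left Kan extensions along maps in $\mathcal{H}$. Hence $\mathsf{LInj}(\mathcal{H})$ and $\mathsf{RInj}(\mathcal{H})$ are full sub-2-categories of $\mathcal{K}$.
   Context: A 1-cell $f:A\to B$ is a corepresentable surjection if for every object $X$ the functor $-\circ f:\mathcal{K}(B,X)\to\mathcal{K}(A,X)$ is conservative. $X$ is right Kan injective w.r.t. $f:A\to B$ if for every $x:A\to X$ a right Kan extension $\mathsf{ran}_fx$ exists (a 1-cell $B\to X$ with universal 2-cell $\epsilon:\mathsf{ran}_fx\circ f\Rightarrow x$) and $\epsilon$ is invertible; left Kan injectivity is the dual notion (with left Kan extensions and invertible units). A 1-cell $h$ preserves $\mathsf{ran}_fx$ if $(h\circ\mathsf{ran}_fx,h\epsilon)$ is a right Kan extension of $hx$ along $f$. $\mathsf{RInj}(\mathcal{H})$ (resp. $\mathsf{LInj}(\mathcal{H})$) is the locally full sub-2-category of objects right (resp. left) Kan injective w.r.t. all maps in $\mathcal{H}$ and 1-cells preserving these right (resp. left) Kan extensions. *)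

theory Defs
  imports Main
begin

text \<open>A (strict) 2-category, presented as a record of data subject to the axioms
  of the locale two_category.  1-cells compose as comp1 g f = g after f; 2-cells compose
  vertically as vcomp beta alpha = beta after alpha, and horizontally as
  hcomp beta alpha : comp1 g f => comp1 g' f' for alpha : f => f' and beta : g => g'.\<close>

record ('o, 'a, 'c) two_cat =
  obj   :: "'o set"
  arr   :: "'a set"
  dom1  :: "'a \<Rightarrow> 'o"
  cod1  :: "'a \<Rightarrow> 'o"
  id1   :: "'o \<Rightarrow> 'a"
  comp1 :: "'a \<Rightarrow> 'a \<Rightarrow> 'a"
  cell  :: "'c set"
  src2  :: "'c \<Rightarrow> 'a"
  tgt2  :: "'c \<Rightarrow> 'a"
  id2   :: "'a \<Rightarrow> 'c"
  vcomp :: "'c \<Rightarrow> 'c \<Rightarrow> 'c"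
  hcomp :: "'c \<Rightarrow> 'c \<Rightarrow> 'c"

definition hom1 :: "('o, 'a, 'c, 'z) two_cat_scheme \<Rightarrow> 'o \<Rightarrow> 'o \<Rightarrow> 'a set" where
  "hom1 K A B = {f \<in> arr K. dom1 K f = A \<and> cod1 K f = B}"

definition hom2 :: "('o, 'a, 'c, 'z) two_cat_scheme \<Rightarrow> 'a \<Rightarrow> 'a \<Rightarrow> 'c set" where
  "hom2 K f g = {\<alpha> \<in> cell K. src2 K \<alpha> = f \<and> tgt2 K \<alpha> = g}"

locale two_category =
  fixes K :: "('o, 'a, 'c, 'z) two_cat_scheme"
  assumes arr_obj: "f \<in> arr K \<Longrightarrow> dom1 K f \<in> obj K \<and> cod1 K f \<in> obj K"
    and id1_hom: "A \<in> obj K \<Longrightarrow> id1 K A \<in> hom1 K A A"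
    and comp1_hom: "f \<in> hom1 K A B \<Longrightarrow> g \<in> hom1 K B C \<Longrightarrow> comp1 K g f \<in> hom1 K A C"
    and comp1_assoc: "f \<in> hom1 K A B \<Longrightarrow> g \<in> hom1 K B C \<Longrightarrow> h \<in> hom1 K C D \<Longrightarrow>
        comp1 K h (comp1 K g f) = comp1 K (comp1 K h g) f"
    and comp1_id_left: "f \<in> hom1 K A B \<Longrightarrow> comp1 K (id1 K B) f = f"
    and comp1_id_right: "f \<in> hom1 K A B \<Longrightarrow> comp1 K f (id1 K A) = f"
    and cell_arr: "\<alpha> \<in> cell K \<Longrightarrow> \<exists>A B. src2 K \<alpha> \<in> hom1 K A B \<and> tgt2 K \<alpha> \<in> hom1 K A B"
    and id2_hom: "f \<in> arr K \<Longrightarrow> id2 K f \<in> hom2 K f f"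
    and vcomp_hom: "\<alpha> \<in> hom2 K f g \<Longrightarrow> \<beta> \<in> hom2 K g h \<Longrightarrow> vcomp K \<beta> \<alpha> \<in> hom2 K f h"
    and vcomp_assoc: "\<alpha> \<in> hom2 K f g \<Longrightarrow> \<beta> \<in> hom2 K g h \<Longrightarrow> \<gamma> \<in> hom2 K h k \<Longrightarrow>
        vcomp K \<gamma> (vcomp K \<beta> \<alpha>) = vcomp K (vcomp K \<gamma> \<beta>) \<alpha>"
    and vcomp_id_left: "\<alpha> \<in> hom2 K f g \<Longrightarrow> vcomp K (id2 K g) \<alpha> = \<alpha>"
    and vcomp_id_right: "\<alpha> \<in> hom2 K f g \<Longrightarrow> vcomp K \<alpha> (id2 K f) = \<alpha>"
    and hcomp_hom: "f \<in> hom1 K A B \<Longrightarrow> f' \<in> hom1 K A B \<Longrightarrow> g \<in> hom1 K B C \<Longrightarrow> g' \<in> hom1 K B C \<Longrightarrow>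
        \<alpha> \<in> hom2 K f f' \<Longrightarrow> \<beta> \<in> hom2 K g g' \<Longrightarrow>
        hcomp K \<beta> \<alpha> \<in> hom2 K (comp1 K g f) (comp1 K g' f')"
    and hcomp_assoc: "f \<in> hom1 K A B \<Longrightarrow> f' \<in> hom1 K A B \<Longrightarrow> g \<in> hom1 K B C \<Longrightarrow> g' \<in> hom1 K B C \<Longrightarrow>
        h \<in> hom1 K C D \<Longrightarrow> h' \<in> hom1 K C D \<Longrightarrow>
        \<alpha> \<in> hom2 K f f' \<Longrightarrow> \<beta> \<in> hom2 K g g' \<Longrightarrow> \<gamma> \<in> hom2 K h h' \<Longrightarrow>
        hcomp K \<gamma> (hcomp K \<beta> \<alpha>) = hcomp K (hcomp K \<gamma> \<beta>) \<alpha>"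
    and hcomp_id2: "f \<in> hom1 K A B \<Longrightarrow> g \<in> hom1 K B C \<Longrightarrow>
        hcomp K (id2 K g) (id2 K f) = id2 K (comp1 K g f)"
    and hcomp_unit_left: "f \<in> hom1 K A B \<Longrightarrow> f' \<in> hom1 K A B \<Longrightarrow> \<alpha> \<in> hom2 K f f' \<Longrightarrow>
        hcomp K (id2 K (id1 K B)) \<alpha> = \<alpha>"
    and hcomp_unit_right: "f \<in> hom1 K A B \<Longrightarrow> f' \<in> hom1 K A B \<Longrightarrow> \<alpha> \<in> hom2 K f f' \<Longrightarrow>
        hcomp K \<alpha> (id2 K (id1 K A)) = \<alpha>"
    and interchange: "f \<in> hom1 K A B \<Longrightarrow> f' \<in> hom1 K A B \<Longrightarrow> f'' \<in> hom1 K A B \<Longrightarrow>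
        g \<in> hom1 K B C \<Longrightarrow> g' \<in> hom1 K B C \<Longrightarrow> g'' \<in> hom1 K B C \<Longrightarrow>
        \<alpha> \<in> hom2 K f f' \<Longrightarrow> \<alpha>' \<in> hom2 K f' f'' \<Longrightarrow> \<beta> \<in> hom2 K g g' \<Longrightarrow> \<beta>' \<in> hom2 K g' g'' \<Longrightarrow>
        hcomp K (vcomp K \<beta>' \<beta>) (vcomp K \<alpha>' \<alpha>) = vcomp K (hcomp K \<beta>' \<alpha>') (hcomp K \<beta> \<alpha>)"

definition whiskerL :: "('o, 'a, 'c, 'z) two_cat_scheme \<Rightarrow> 'a \<Rightarrow> 'c \<Rightarrow> 'c" where
  "whiskerL K h \<alpha> = hcomp K (id2 K h) \<alpha>"

definition whiskerR :: "('o, 'a, 'c, 'z) two_cat_scheme \<Rightarrow> 'c \<Rightarrow> 'a \<Rightarrow> 'c" where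
  "whiskerR K \<alpha> f = hcomp K \<alpha> (id2 K f)"

definition invertible2 :: "('o, 'a, 'c, 'z) two_cat_scheme \<Rightarrow> 'c \<Rightarrow> bool" where
  "invertible2 K \<alpha> \<longleftrightarrow> \<alpha> \<in> cell K \<and>
     (\<exists>\<beta> \<in> hom2 K (tgt2 K \<alpha>) (src2 K \<alpha>).
        vcomp K \<beta> \<alpha> = id2 K (src2 K \<alpha>) \<and> vcomp K \<alpha> \<beta> = id2 K (tgt2 K \<alpha>))"

definition corep_surj :: "('o, 'a, 'c, 'z) two_cat_scheme \<Rightarrow> 'a \<Rightarrow> bool" where
  "corep_surj K f \<longleftrightarrow> f \<in> arr K \<and>
     (\<forall>X \<in> obj K. \<forall>g \<in> hom1 K (cod1 K f) X. \<forall>g' \<in> hom1 K (cod1 K f) X.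
        \<forall>\<alpha> \<in> hom2 K g g'. invertible2 K (whiskerR K \<alpha> f) \<longrightarrow> invertible2 K \<alpha>)"

definition is_ran :: "('o, 'a, 'c, 'z) two_cat_scheme \<Rightarrow> 'a \<Rightarrow> 'a \<Rightarrow> 'a \<Rightarrow> 'c \<Rightarrow> bool" where
  "is_ran K f x r \<epsilon> \<longleftrightarrow> f \<in> arr K \<and> x \<in> arr K \<and> dom1 K x = dom1 K f \<and>
     r \<in> hom1 K (cod1 K f) (cod1 K x) \<and> \<epsilon> \<in> hom2 K (comp1 K r f) x \<and>
     (\<forall>s \<in> hom1 K (cod1 K f) (cod1 K x). \<forall>\<alpha> \<in> hom2 K (comp1 K s f) x.
        \<exists>!\<beta>. \<beta> \<in> hom2 K s r \<and> vcomp K \<epsilon> (whiskerR K \<beta> f) = \<alpha>)"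

definition is_lan :: "('o, 'a, 'c, 'z) two_cat_scheme \<Rightarrow> 'a \<Rightarrow> 'a \<Rightarrow> 'a \<Rightarrow> 'c \<Rightarrow> bool" where
  "is_lan K f x l \<eta> \<longleftrightarrow> f \<in> arr K \<and> x \<in> arr K \<and> dom1 K x = dom1 K f \<and>
     l \<in> hom1 K (cod1 K f) (cod1 K x) \<and> \<eta> \<in> hom2 K x (comp1 K l f) \<and>
     (\<forall>s \<in> hom1 K (cod1 K f) (cod1 K x). \<forall>\<alpha> \<in> hom2 K x (comp1 K s f).
        \<exists>!\<beta>. \<beta> \<in> hom2 K l s \<and> vcomp K (whiskerR K \<beta> f) \<eta> = \<alpha>)"

definition right_Kan_injective :: "('o, 'a, 'c, 'z) two_cat_scheme \<Rightarrow> 'o \<Rightarrow> 'a \<Rightarrow> bool" where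
  "right_Kan_injective K X f \<longleftrightarrow>
     (\<forall>x \<in> hom1 K (dom1 K f) X. \<exists>r \<epsilon>. is_ran K f x r \<epsilon> \<and> invertible2 K \<epsilon>)"

definition left_Kan_injective :: "('o, 'a, 'c, 'z) two_cat_scheme \<Rightarrow> 'o \<Rightarrow> 'a \<Rightarrow> bool" where
  "left_Kan_injective K X f \<longleftrightarrow>
     (\<forall>x \<in> hom1 K (dom1 K f) X. \<exists>l \<eta>. is_lan K f x l \<eta> \<and> invertible2 K \<eta>)"

definition preserves_ran :: "('o, 'a, 'c, 'z) two_cat_scheme \<Rightarrow> 'a \<Rightarrow> 'a \<Rightarrow> 'a \<Rightarrow> 'a \<Rightarrow> 'c \<Rightarrow> bool" where
  "preserves_ran K h f x r \<epsilon> \<longleftrightarrow> is_ran K f (comp1 K h x) (comp1 K h r) (whiskerL K h \<epsilon>)"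

definition preserves_lan :: "('o, 'a, 'c, 'z) two_cat_scheme \<Rightarrow> 'a \<Rightarrow> 'a \<Rightarrow> 'a \<Rightarrow> 'a \<Rightarrow> 'c \<Rightarrow> bool" where
  "preserves_lan K h f x l \<eta> \<longleftrightarrow> is_lan K f (comp1 K h x) (comp1 K h l) (whiskerL K h \<eta>)"

definition RInj_obj :: "('o, 'a, 'c, 'z) two_cat_scheme \<Rightarrow> 'a set \<Rightarrow> 'o \<Rightarrow> bool" where
  "RInj_obj K H X \<longleftrightarrow> X \<in> obj K \<and> (\<forall>f \<in> H. right_Kan_injective K X f)"

definition LInj_obj :: "('o, 'a, 'c, 'z) two_cat_scheme \<Rightarrow> 'a set \<Rightarrow> 'o \<Rightarrow> bool" where
  "LInj_obj K H X \<longleftrightarrow> X \<in> obj K \<and> (\<forall>f \<in> H. left_Kan_injective K X f)"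

definition RInj_arr :: "('o, 'a, 'c, 'z) two_cat_scheme \<Rightarrow> 'a set \<Rightarrow> 'a \<Rightarrow> bool" where
  "RInj_arr K H h \<longleftrightarrow> h \<in> arr K \<and>
     (\<forall>f \<in> H. \<forall>x r \<epsilon>. is_ran K f x r \<epsilon> \<and> cod1 K x = dom1 K h \<longrightarrow> preserves_ran K h f x r \<epsilon>)"

definition LInj_arr :: "('o, 'a, 'c, 'z) two_cat_scheme \<Rightarrow> 'a set \<Rightarrow> 'a \<Rightarrow> bool" where
  "LInj_arr K H h \<longleftrightarrow> h \<in> arr K \<and>
     (\<forall>f \<in> H. \<forall>x l \<eta>. is_lan K f x l \<eta> \<and> cod1 K x = dom1 K h \<longrightarrow> preserves_lan K h f x l \<eta>)"

end

theory Submission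
  imports Defs
begin

context two_category
begin

lemma hom1_arr: "f \<in> hom1 K A B \<Longrightarrow> f \<in> arr K"
  by (simp add: hom1_def)

lemma arr_hom1: "f \<in> arr K \<Longrightarrow> f \<in> hom1 K (dom1 K f) (cod1 K f)"
  by (simp add: hom1_def)

lemma id2_hom': "f \<in> hom1 K A B \<Longrightarrow> id2 K f \<in> hom2 K f f"
  by (rule id2_hom) (simp add: hom1_def)

lemma wR_hom: "f \<in> hom1 K A B \<Longrightarrow> g \<in> hom1 K B C \<Longrightarrow> g' \<in> hom1 K B C \<Longrightarrow>
   \<alpha> \<in> hom2 K g g' \<Longrightarrow> whiskerR K \<alpha> f \<in> hom2 K (comp1 K g f) (comp1 K g' f)"
  unfolding whiskerR_def by (rule hcomp_hom) (auto intro: id2_hom')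

lemma wL_hom: "h \<in> hom1 K B C \<Longrightarrow> f \<in> hom1 K A B \<Longrightarrow> f' \<in> hom1 K A B \<Longrightarrow>
   \<alpha> \<in> hom2 K f f' \<Longrightarrow> whiskerL K h \<alpha> \<in> hom2 K (comp1 K h f) (comp1 K h f')"
  unfolding whiskerL_def by (rule hcomp_hom) (auto intro: id2_hom')

lemma wR_vcomp: "f \<in> hom1 K A B \<Longrightarrow> g \<in> hom1 K B C \<Longrightarrow> g' \<in> hom1 K B C \<Longrightarrow> g'' \<in> hom1 K B C \<Longrightarrow>
   \<alpha> \<in> hom2 K g g' \<Longrightarrow> \<beta> \<in> hom2 K g' g'' \<Longrightarrow>
   whiskerR K (vcomp K \<beta> \<alpha>) f = vcomp K (whiskerR K \<beta> f) (whiskerR K \<alpha> f)"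
proof -
  assume a: "f \<in> hom1 K A B" "g \<in> hom1 K B C" "g' \<in> hom1 K B C" "g'' \<in> hom1 K B C"
    "\<alpha> \<in> hom2 K g g'" "\<beta> \<in> hom2 K g' g''"
  have i: "id2 K f \<in> hom2 K f f" using a by (auto intro: id2_hom')
  have "whiskerR K (vcomp K \<beta> \<alpha>) f = hcomp K (vcomp K \<beta> \<alpha>) (vcomp K (id2 K f) (id2 K f))"
    unfolding whiskerR_def using vcomp_id_left[OF i] by simp
  also have "\<dots> = vcomp K (whiskerR K \<beta> f) (whiskerR K \<alpha> f)"
    unfolding whiskerR_def by (rule interchange[OF a(1) a(1) a(1) a(2) a(3) a(4) i i a(5) a(6)])
  finally show ?thesis .
qed

lemma wL_vcomp: "h \<in> hom1 K B C \<Longrightarrow> f \<in> hom1 K A B \<Longrightarrow> f' \<in> hom1 K A B \<Longrightarrow> f'' \<in> hom1 K A B \<Longrightarrow>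
   \<alpha> \<in> hom2 K f f' \<Longrightarrow> \<beta> \<in> hom2 K f' f'' \<Longrightarrow>
   whiskerL K h (vcomp K \<beta> \<alpha>) = vcomp K (whiskerL K h \<beta>) (whiskerL K h \<alpha>)"
proof -
  assume a: "h \<in> hom1 K B C" "f \<in> hom1 K A B" "f' \<in> hom1 K A B" "f'' \<in> hom1 K A B"
    "\<alpha> \<in> hom2 K f f'" "\<beta> \<in> hom2 K f' f''"
  have i: "id2 K h \<in> hom2 K h h" using a by (auto intro: id2_hom')
  have "whiskerL K h (vcomp K \<beta> \<alpha>) = hcomp K (vcomp K (id2 K h) (id2 K h)) (vcomp K \<beta> \<alpha>)"
    unfolding whiskerL_def using vcomp_id_left[OF i] by simp
  also have "\<dots> = vcomp K (whiskerL K h \<beta>) (whiskerL K h \<alpha>)"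
    unfolding whiskerL_def by (rule interchange[OF a(2) a(3) a(4) a(1) a(1) a(1) a(5) a(6) i i])
  finally show ?thesis .
qed

lemma wR_id: "f \<in> hom1 K A B \<Longrightarrow> g \<in> hom1 K B C \<Longrightarrow> whiskerR K (id2 K g) f = id2 K (comp1 K g f)"
  unfolding whiskerR_def by (rule hcomp_id2)

lemma wL_id: "h \<in> hom1 K B C \<Longrightarrow> f \<in> hom1 K A B \<Longrightarrow> whiskerL K h (id2 K f) = id2 K (comp1 K h f)"
  unfolding whiskerL_def by (rule hcomp_id2)

lemma wLR: "f \<in> hom1 K A B \<Longrightarrow> g \<in> hom1 K B C \<Longrightarrow> g' \<in> hom1 K B C \<Longrightarrow> h \<in> hom1 K C D \<Longrightarrow>
   \<beta> \<in> hom2 K g g' \<Longrightarrow> whiskerL K h (whiskerR K \<beta> f) = whiskerR K (whiskerL K h \<beta>) f"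
  unfolding whiskerL_def whiskerR_def
  using hcomp_assoc[OF _ _ _ _ _ _ id2_hom' _ id2_hom'] by blast

lemma inv_E:
  assumes "invertible2 K \<alpha>" "\<alpha> \<in> hom2 K a b"
  obtains \<beta> where "\<beta> \<in> hom2 K b a" "vcomp K \<beta> \<alpha> = id2 K a" "vcomp K \<alpha> \<beta> = id2 K b"
  using assms unfolding invertible2_def hom2_def by auto

lemma inv_I:
  assumes "\<alpha> \<in> hom2 K a b" "\<beta> \<in> hom2 K b a" "vcomp K \<beta> \<alpha> = id2 K a" "vcomp K \<alpha> \<beta> = id2 K b"
  shows "invertible2 K \<alpha>"
  using assms unfolding invertible2_def hom2_def by auto

lemma inv_vcomp:
  assumes a: "\<alpha> \<in> hom2 K a b" and b: "\<beta> \<in> hom2 K b c"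
    and ia: "invertible2 K \<alpha>" and ib: "invertible2 K \<beta>"
  shows "invertible2 K (vcomp K \<beta> \<alpha>)"
proof -
  obtain \<alpha>' where a': "\<alpha>' \<in> hom2 K b a" "vcomp K \<alpha>' \<alpha> = id2 K a" "vcomp K \<alpha> \<alpha>' = id2 K b"
    using inv_E[OF ia a] by blast
  obtain \<beta>' where b': "\<beta>' \<in> hom2 K c b" "vcomp K \<beta>' \<beta> = id2 K b" "vcomp K \<beta> \<beta>' = id2 K c"
    using inv_E[OF ib b] by blast
  have ba: "vcomp K \<beta> \<alpha> \<in> hom2 K a c" by (rule vcomp_hom[OF a b])
  have ab': "vcomp K \<alpha>' \<beta>' \<in> hom2 K c a" by (rule vcomp_hom[OF b'(1) a'(1)])
  have "vcomp K (vcomp K \<alpha>' \<beta>') (vcomp K \<beta> \<alpha>) = vcomp K \<alpha>' (vcomp K \<beta>' (vcomp K \<beta> \<alpha>))"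
    using vcomp_assoc[OF ba b'(1) a'(1)] by simp
  also have "\<dots> = vcomp K \<alpha>' (vcomp K (vcomp K \<beta>' \<beta>) \<alpha>)"
    using vcomp_assoc[OF a b b'(1)] by simp
  also have "\<dots> = id2 K a" using b'(2) vcomp_id_left[OF a] a'(2) by simp
  finally have 1: "vcomp K (vcomp K \<alpha>' \<beta>') (vcomp K \<beta> \<alpha>) = id2 K a" .
  have "vcomp K (vcomp K \<beta> \<alpha>) (vcomp K \<alpha>' \<beta>') = vcomp K \<beta> (vcomp K \<alpha> (vcomp K \<alpha>' \<beta>'))"
    using vcomp_assoc[OF ab' a b] by simp
  also have "\<dots> = vcomp K \<beta> (vcomp K (vcomp K \<alpha> \<alpha>') \<beta>')"
    using vcomp_assoc[OF b'(1) a'(1) a] by simp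
  also have "\<dots> = id2 K c" using a'(3) vcomp_id_left[OF b'(1)] b'(3) by simp
  finally have 2: "vcomp K (vcomp K \<beta> \<alpha>) (vcomp K \<alpha>' \<beta>') = id2 K c" .
  show ?thesis by (rule inv_I[OF ba ab' 1 2])
qed

lemma inv_wR:
  assumes f: "f \<in> hom1 K A B" and g: "g \<in> hom1 K B C" and g': "g' \<in> hom1 K B C"
    and a: "\<alpha> \<in> hom2 K g g'" and ia: "invertible2 K \<alpha>"
  shows "invertible2 K (whiskerR K \<alpha> f)"
proof -
  obtain \<alpha>' where a': "\<alpha>' \<in> hom2 K g' g" "vcomp K \<alpha>' \<alpha> = id2 K g" "vcomp K \<alpha> \<alpha>' = id2 K g'"
    using inv_E[OF ia a] by blast
  show ?thesis
    apply (rule inv_I[OF wR_hom[OF f g g' a] wR_hom[OF f g' g a'(1)]])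
    using wR_vcomp[OF f g g' g a a'(1)] wR_vcomp[OF f g' g g' a'(1) a] a' wR_id[OF f g] wR_id[OF f g']
    by simp_all
qed

lemma inv_wL:
  assumes h: "h \<in> hom1 K B C" and f: "f \<in> hom1 K A B" and f': "f' \<in> hom1 K A B"
    and a: "\<alpha> \<in> hom2 K f f'" and ia: "invertible2 K \<alpha>"
  shows "invertible2 K (whiskerL K h \<alpha>)"
proof -
  obtain \<alpha>' where a': "\<alpha>' \<in> hom2 K f' f" "vcomp K \<alpha>' \<alpha> = id2 K f" "vcomp K \<alpha> \<alpha>' = id2 K f'"
    using inv_E[OF ia a] by blast
  show ?thesis
    apply (rule inv_I[OF wL_hom[OF h f f' a] wL_hom[OF h f' f a'(1)]])
    using wL_vcomp[OF h f f' f a a'(1)] wL_vcomp[OF h f' f f' a'(1) a] a' wL_id[OF h f] wL_id[OF h f']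
    by simp_all
qed


lemma ran_inv:
  assumes R1: "is_ran K f x r \<epsilon>" and R2: "is_ran K f x r' \<epsilon>'" and ie: "invertible2 K \<epsilon>'"
  shows "invertible2 K \<epsilon>"
proof -
  have f: "f \<in> hom1 K (dom1 K f) (cod1 K f)" using R1 by (simp add: is_ran_def hom1_def)
  have r: "r \<in> hom1 K (cod1 K f) (cod1 K x)" and e: "\<epsilon> \<in> hom2 K (comp1 K r f) x"
    and U1: "\<forall>s \<in> hom1 K (cod1 K f) (cod1 K x). \<forall>\<alpha> \<in> hom2 K (comp1 K s f) x.
        \<exists>!\<beta>. \<beta> \<in> hom2 K s r \<and> vcomp K \<epsilon> (whiskerR K \<beta> f) = \<alpha>"
    using R1 by (auto simp: is_ran_def)
  have r': "r' \<in> hom1 K (cod1 K f) (cod1 K x)" and e': "\<epsilon>' \<in> hom2 K (comp1 K r' f) x"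
    and U2: "\<forall>s \<in> hom1 K (cod1 K f) (cod1 K x). \<forall>\<alpha> \<in> hom2 K (comp1 K s f) x.
        \<exists>!\<beta>. \<beta> \<in> hom2 K s r' \<and> vcomp K \<epsilon>' (whiskerR K \<beta> f) = \<alpha>"
    using R2 by (auto simp: is_ran_def)
  obtain \<beta> where b: "\<beta> \<in> hom2 K r r'" "vcomp K \<epsilon>' (whiskerR K \<beta> f) = \<epsilon>"
    using U2 r e by blast
  obtain \<beta>' where b': "\<beta>' \<in> hom2 K r' r" "vcomp K \<epsilon> (whiskerR K \<beta>' f) = \<epsilon>'"
    using U1 r' e' by blast
  have wb: "whiskerR K \<beta> f \<in> hom2 K (comp1 K r f) (comp1 K r' f)" by (rule wR_hom[OF f r r' b(1)])
  have wb': "whiskerR K \<beta>' f \<in> hom2 K (comp1 K r' f) (comp1 K r f)" by (rule wR_hom[OF f r' r b'(1)])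
  have c1: "vcomp K \<beta>' \<beta> = id2 K r"
  proof -
    have u: "\<exists>!\<gamma>. \<gamma> \<in> hom2 K r r \<and> vcomp K \<epsilon> (whiskerR K \<gamma> f) = \<epsilon>" using U1 r e by blast
    have "vcomp K \<epsilon> (whiskerR K (vcomp K \<beta>' \<beta>) f) = vcomp K \<epsilon> (vcomp K (whiskerR K \<beta>' f) (whiskerR K \<beta> f))"
      using wR_vcomp[OF f r r' r b(1) b'(1)] by simp
    also have "\<dots> = \<epsilon>" using vcomp_assoc[OF wb wb' e] b b' by simp
    finally have 1: "vcomp K \<epsilon> (whiskerR K (vcomp K \<beta>' \<beta>) f) = \<epsilon>" .
    have 2: "vcomp K \<epsilon> (whiskerR K (id2 K r) f) = \<epsilon>" using wR_id[OF f r] vcomp_id_right[OF e] by simp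
    show ?thesis using u 1 2 vcomp_hom[OF b(1) b'(1)] id2_hom'[OF r] by blast
  qed
  have c2: "vcomp K \<beta> \<beta>' = id2 K r'"
  proof -
    have u: "\<exists>!\<gamma>. \<gamma> \<in> hom2 K r' r' \<and> vcomp K \<epsilon>' (whiskerR K \<gamma> f) = \<epsilon>'" using U2 r' e' by blast
    have "vcomp K \<epsilon>' (whiskerR K (vcomp K \<beta> \<beta>') f) = vcomp K \<epsilon>' (vcomp K (whiskerR K \<beta> f) (whiskerR K \<beta>' f))"
      using wR_vcomp[OF f r' r r' b'(1) b(1)] by simp
    also have "\<dots> = \<epsilon>'" using vcomp_assoc[OF wb' wb e'] b b' by simp
    finally have 1: "vcomp K \<epsilon>' (whiskerR K (vcomp K \<beta> \<beta>') f) = \<epsilon>'" .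
    have 2: "vcomp K \<epsilon>' (whiskerR K (id2 K r') f) = \<epsilon>'" using wR_id[OF f r'] vcomp_id_right[OF e'] by simp
    show ?thesis using u 1 2 vcomp_hom[OF b'(1) b(1)] id2_hom'[OF r'] by blast
  qed
  have ib: "invertible2 K \<beta>" by (rule inv_I[OF b(1) b'(1) c1 c2])
  have "invertible2 K (vcomp K \<epsilon>' (whiskerR K \<beta> f))"
    by (rule inv_vcomp[OF wb e' inv_wR[OF f r r' b(1) ib] ie])
  then show ?thesis using b(2) by simp
qed

lemma ran_transfer:
  assumes R: "is_ran K f x r \<epsilon>" and th: "\<theta> \<in> hom2 K s r" and it: "invertible2 K \<theta>"
    and s: "s \<in> hom1 K (cod1 K f) (cod1 K x)"
  shows "is_ran K f x s (vcomp K \<epsilon> (whiskerR K \<theta> f))"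
proof -
  have f: "f \<in> hom1 K (dom1 K f) (cod1 K f)" using R by (simp add: is_ran_def hom1_def)
  have r: "r \<in> hom1 K (cod1 K f) (cod1 K x)" and e: "\<epsilon> \<in> hom2 K (comp1 K r f) x"
    and U: "\<forall>s \<in> hom1 K (cod1 K f) (cod1 K x). \<forall>\<alpha> \<in> hom2 K (comp1 K s f) x.
        \<exists>!\<beta>. \<beta> \<in> hom2 K s r \<and> vcomp K \<epsilon> (whiskerR K \<beta> f) = \<alpha>"
    using R by (auto simp: is_ran_def)
  obtain \<theta>' where t': "\<theta>' \<in> hom2 K r s" "vcomp K \<theta>' \<theta> = id2 K s" "vcomp K \<theta> \<theta>' = id2 K r"
    using inv_E[OF it th] by blast
  have wt: "whiskerR K \<theta> f \<in> hom2 K (comp1 K s f) (comp1 K r f)" by (rule wR_hom[OF f s r th])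
  have wt': "whiskerR K \<theta>' f \<in> hom2 K (comp1 K r f) (comp1 K s f)" by (rule wR_hom[OF f r s t'(1)])
  have e2: "vcomp K \<epsilon> (whiskerR K \<theta> f) \<in> hom2 K (comp1 K s f) x" by (rule vcomp_hom[OF wt e])
  have "\<exists>!\<beta>. \<beta> \<in> hom2 K t s \<and> vcomp K (vcomp K \<epsilon> (whiskerR K \<theta> f)) (whiskerR K \<beta> f) = \<alpha>"
    if t: "t \<in> hom1 K (cod1 K f) (cod1 K x)" and a: "\<alpha> \<in> hom2 K (comp1 K t f) x" for t \<alpha>
  proof -
    have u: "\<exists>!\<beta>. \<beta> \<in> hom2 K t r \<and> vcomp K \<epsilon> (whiskerR K \<beta> f) = \<alpha>" using U t a by blast
    then obtain \<beta>0 where b0: "\<beta>0 \<in> hom2 K t r" "vcomp K \<epsilon> (whiskerR K \<beta>0 f) = \<alpha>" by blast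
    have wb0: "whiskerR K \<beta>0 f \<in> hom2 K (comp1 K t f) (comp1 K r f)" by (rule wR_hom[OF f t r b0(1)])
    show ?thesis
    proof (rule ex1I[where a="vcomp K \<theta>' \<beta>0"], rule conjI)
      show h: "vcomp K \<theta>' \<beta>0 \<in> hom2 K t s" by (rule vcomp_hom[OF b0(1) t'(1)])
      have "vcomp K (vcomp K \<epsilon> (whiskerR K \<theta> f)) (whiskerR K (vcomp K \<theta>' \<beta>0) f)
          = vcomp K (vcomp K \<epsilon> (whiskerR K \<theta> f)) (vcomp K (whiskerR K \<theta>' f) (whiskerR K \<beta>0 f))"
        using wR_vcomp[OF f t r s b0(1) t'(1)] by simp
      also have "\<dots> = vcomp K (vcomp K (vcomp K \<epsilon> (whiskerR K \<theta> f)) (whiskerR K \<theta>' f)) (whiskerR K \<beta>0 f)"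
        using vcomp_assoc[OF wb0 wt' e2] by simp
      also have "vcomp K (vcomp K \<epsilon> (whiskerR K \<theta> f)) (whiskerR K \<theta>' f) = vcomp K \<epsilon> (vcomp K (whiskerR K \<theta> f) (whiskerR K \<theta>' f))"
        using vcomp_assoc[OF wt' wt e] by simp
      also have "vcomp K (whiskerR K \<theta> f) (whiskerR K \<theta>' f) = id2 K (comp1 K r f)"
        using wR_vcomp[OF f r s r t'(1) th] t'(3) wR_id[OF f r] by simp
      also have "vcomp K \<epsilon> (id2 K (comp1 K r f)) = \<epsilon>" by (rule vcomp_id_right[OF e])
      finally show "vcomp K (vcomp K \<epsilon> (whiskerR K \<theta> f)) (whiskerR K (vcomp K \<theta>' \<beta>0) f) = \<alpha>"
        using b0(2) by simp
    next
      fix \<beta> assume B: "\<beta> \<in> hom2 K t s \<and> vcomp K (vcomp K \<epsilon> (whiskerR K \<theta> f)) (whiskerR K \<beta> f) = \<alpha>"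
      have wb: "whiskerR K \<beta> f \<in> hom2 K (comp1 K t f) (comp1 K s f)" using wR_hom[OF f t s] B by blast
      have tb: "vcomp K \<theta> \<beta> \<in> hom2 K t r" using vcomp_hom[OF _ th] B by blast
      have "vcomp K \<epsilon> (whiskerR K (vcomp K \<theta> \<beta>) f) = vcomp K \<epsilon> (vcomp K (whiskerR K \<theta> f) (whiskerR K \<beta> f))"
        using wR_vcomp[OF f t s r _ th] B by simp
      also have "\<dots> = \<alpha>" using vcomp_assoc[OF wb wt e] B by simp
      finally have "vcomp K \<theta> \<beta> = \<beta>0" using u b0 tb by blast
      then have "vcomp K \<theta>' (vcomp K \<theta> \<beta>) = vcomp K \<theta>' \<beta>0" by simp
      moreover have "vcomp K \<theta>' (vcomp K \<theta> \<beta>) = \<beta>"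
        using vcomp_assoc[OF _ th t'(1), of \<beta> t] B t'(2) vcomp_id_left[of \<beta> t s] by simp
      ultimately show "\<beta> = vcomp K \<theta>' \<beta>0" by simp
    qed
  qed
  then show ?thesis using R s e2 by (auto simp: is_ran_def)
qed

lemma RInj_arr_main:
  assumes HA: "H \<subseteq> arr K" and HC: "\<forall>f \<in> H. corep_surj K f"
    and X: "RInj_obj K H X" and Y: "RInj_obj K H Y" and g: "g \<in> hom1 K X Y"
  shows "RInj_arr K H g"
  unfolding RInj_arr_def
proof (intro conjI allI impI ballI)
  show "g \<in> arr K" using g by (simp add: hom1_def)
  fix f x r \<epsilon> assume fH: "f \<in> H" and R0: "is_ran K f x r \<epsilon> \<and> cod1 K x = dom1 K g"
  then have R: "is_ran K f x r \<epsilon>" and cx: "cod1 K x = X" using g by (auto simp: hom1_def)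
  have f: "f \<in> hom1 K (dom1 K f) (cod1 K f)" using R by (simp add: is_ran_def hom1_def)
  have xh: "x \<in> hom1 K (dom1 K f) X" using R cx by (simp add: is_ran_def hom1_def)
  have r: "r \<in> hom1 K (cod1 K f) X" and e: "\<epsilon> \<in> hom2 K (comp1 K r f) x"
    using R cx by (auto simp: is_ran_def)
  obtain r' \<epsilon>' where R': "is_ran K f x r' \<epsilon>'" "invertible2 K \<epsilon>'"
    using X fH xh unfolding RInj_obj_def right_Kan_injective_def by blast
  have ie: "invertible2 K \<epsilon>" by (rule ran_inv[OF R R'])
  have gx: "comp1 K g x \<in> hom1 K (dom1 K f) Y" by (rule comp1_hom[OF xh g])
  obtain s \<delta> where S: "is_ran K f (comp1 K g x) s \<delta>" "invertible2 K \<delta>"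
    using Y fH gx unfolding RInj_obj_def right_Kan_injective_def by blast
  have cgx: "cod1 K (comp1 K g x) = Y" using gx by (simp add: hom1_def)
  have s: "s \<in> hom1 K (cod1 K f) Y" and d: "\<delta> \<in> hom2 K (comp1 K s f) (comp1 K g x)"
    and U: "\<forall>t \<in> hom1 K (cod1 K f) Y. \<forall>\<alpha> \<in> hom2 K (comp1 K t f) (comp1 K g x).
        \<exists>!\<beta>. \<beta> \<in> hom2 K t s \<and> vcomp K \<delta> (whiskerR K \<beta> f) = \<alpha>"
    using S cgx by (auto simp: is_ran_def)
  have gr: "comp1 K g r \<in> hom1 K (cod1 K f) Y" by (rule comp1_hom[OF r g])
  have rf: "comp1 K r f \<in> hom1 K (dom1 K f) X" by (rule comp1_hom[OF f r])
  have ge0: "whiskerL K g \<epsilon> \<in> hom2 K (comp1 K g (comp1 K r f)) (comp1 K g x)"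
    by (rule wL_hom[OF g rf xh e])
  have ge: "whiskerL K g \<epsilon> \<in> hom2 K (comp1 K (comp1 K g r) f) (comp1 K g x)"
    using ge0 comp1_assoc[OF f r g] by simp
  have ige: "invertible2 K (whiskerL K g \<epsilon>)" by (rule inv_wL[OF g rf xh e ie])
  obtain \<beta> where b: "\<beta> \<in> hom2 K (comp1 K g r) s" "vcomp K \<delta> (whiskerR K \<beta> f) = whiskerL K g \<epsilon>"
    using U gr ge by blast
  obtain \<delta>' where d': "\<delta>' \<in> hom2 K (comp1 K g x) (comp1 K s f)" "vcomp K \<delta>' \<delta> = id2 K (comp1 K s f)"
     "vcomp K \<delta> \<delta>' = id2 K (comp1 K g x)"
    using inv_E[OF S(2) d] by blast
  have id': "invertible2 K \<delta>'" by (rule inv_I[OF d'(1) d d'(3) d'(2)])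
  have wb: "whiskerR K \<beta> f \<in> hom2 K (comp1 K (comp1 K g r) f) (comp1 K s f)"
    by (rule wR_hom[OF f gr s b(1)])
  have "vcomp K \<delta>' (whiskerL K g \<epsilon>) = whiskerR K \<beta> f"
    using vcomp_assoc[OF wb d d'(1)] b(2) d'(2) vcomp_id_left[OF wb] by simp
  moreover have "invertible2 K (vcomp K \<delta>' (whiskerL K g \<epsilon>))"
    by (rule inv_vcomp[OF ge d'(1) ige id'])
  ultimately have iwb: "invertible2 K (whiskerR K \<beta> f)" by simp
  have Yo: "Y \<in> obj K" using Y by (simp add: RInj_obj_def)
  have "corep_surj K f" using HC fH by blast
  then have ib: "invertible2 K \<beta>" unfolding corep_surj_def using Yo gr s b(1) iwb by blast
  have "is_ran K f (comp1 K g x) (comp1 K g r) (vcomp K \<delta> (whiskerR K \<beta> f))"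
    by (rule ran_transfer[OF S(1) b(1) ib]) (use gr cgx in simp)
  then show "preserves_ran K g f x r \<epsilon>" unfolding preserves_ran_def using b(2) by simp
qed

end


definition co2 :: "('o, 'a, 'c, 'z) two_cat_scheme \<Rightarrow> ('o, 'a, 'c) two_cat" where
  "co2 K = (| obj = obj K, arr = arr K, dom1 = dom1 K, cod1 = cod1 K, id1 = id1 K,
     comp1 = comp1 K, cell = cell K, src2 = tgt2 K, tgt2 = src2 K, id2 = id2 K,
     vcomp = (\<lambda>b a. vcomp K a b), hcomp = hcomp K |)"

lemma co2_simps[simp]: "obj (co2 K) = obj K" "arr (co2 K) = arr K" "dom1 (co2 K) = dom1 K"
  "cod1 (co2 K) = cod1 K" "id1 (co2 K) = id1 K" "comp1 (co2 K) = comp1 K" "cell (co2 K) = cell K"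
  "src2 (co2 K) = tgt2 K" "tgt2 (co2 K) = src2 K" "id2 (co2 K) = id2 K"
  "vcomp (co2 K) b a = vcomp K a b" "hcomp (co2 K) = hcomp K"
  by (simp_all add: co2_def)

lemma co2_hom1[simp]: "hom1 (co2 K) = hom1 K"
  by (simp add: hom1_def fun_eq_iff)

lemma co2_hom2[simp]: "hom2 (co2 K) f g = hom2 K g f"
  by (auto simp add: hom2_def)

lemma co2_wR[simp]: "whiskerR (co2 K) = whiskerR K"
  by (simp add: whiskerR_def fun_eq_iff)

lemma co2_wL[simp]: "whiskerL (co2 K) = whiskerL K"
  by (simp add: whiskerL_def fun_eq_iff)

lemma co2_inv[simp]: "invertible2 (co2 K) \<alpha> = invertible2 K \<alpha>"
  unfolding invertible2_def by auto

lemma co2_ran[simp]: "is_ran (co2 K) f x r e = is_lan K f x r e"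
  unfolding is_ran_def is_lan_def by simp

lemma co2_RInj_obj[simp]: "RInj_obj (co2 K) H X = LInj_obj K H X"
  unfolding RInj_obj_def LInj_obj_def right_Kan_injective_def left_Kan_injective_def by simp

lemma co2_RInj_arr[simp]: "RInj_arr (co2 K) H h = LInj_arr K H h"
  unfolding RInj_arr_def LInj_arr_def preserves_ran_def preserves_lan_def by simp

lemma co2_corep: "corep_surj K f \<Longrightarrow> corep_surj (co2 K) f"
  unfolding corep_surj_def by simp

lemma co2_two_category:
  assumes "two_category K" shows "two_category (co2 K)"
proof -
  interpret two_category K by fact
  show ?thesis
  proof (unfold_locales, goal_cases)
    case 1 thus ?case unfolding co2_simps co2_hom1 co2_hom2 by - (rule arr_obj; assumption)
  next case 2 thus ?case unfolding co2_simps co2_hom1 co2_hom2 by - (rule id1_hom; assumption)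
  next case 3 thus ?case unfolding co2_simps co2_hom1 co2_hom2 by - (rule comp1_hom; assumption)
  next case 4 thus ?case unfolding co2_simps co2_hom1 co2_hom2 by - (rule comp1_assoc; assumption)
  next case 5 thus ?case unfolding co2_simps co2_hom1 co2_hom2 by - (rule comp1_id_left; assumption)
  next case 6 thus ?case unfolding co2_simps co2_hom1 co2_hom2 by - (rule comp1_id_right; assumption)
  next case (7 \<alpha>) thus ?case using cell_arr[of \<alpha>] by auto
  next case 8 thus ?case unfolding co2_simps co2_hom1 co2_hom2 by - (rule id2_hom; assumption)
  next case 9 thus ?case unfolding co2_simps co2_hom1 co2_hom2 by - (rule vcomp_hom; assumption)
  next case 10 thus ?case unfolding co2_simps co2_hom1 co2_hom2 by - (rule vcomp_assoc[symmetric]; assumption)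
  next case 11 thus ?case unfolding co2_simps co2_hom1 co2_hom2 by - (rule vcomp_id_right; assumption)
  next case 12 thus ?case unfolding co2_simps co2_hom1 co2_hom2 by - (rule vcomp_id_left; assumption)
  next case 13 thus ?case unfolding co2_simps co2_hom1 co2_hom2 by - (rule hcomp_hom; assumption)
  next case 14 thus ?case unfolding co2_simps co2_hom1 co2_hom2 by - (rule hcomp_assoc; assumption)
  next case 15 thus ?case unfolding co2_simps co2_hom1 co2_hom2 by - (rule hcomp_id2; assumption)
  next case 16 thus ?case unfolding co2_simps co2_hom1 co2_hom2 by - (rule hcomp_unit_left; assumption)
  next case 17 thus ?case unfolding co2_simps co2_hom1 co2_hom2 by - (rule hcomp_unit_right; assumption)
  next case 18 thus ?case unfolding co2_simps co2_hom1 co2_hom2 by - (rule interchange; assumption)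
  qed
qed

theorem proposition2p3p3:
  fixes K :: "('o, 'a, 'c, 'z) two_cat_scheme" and H :: "'a set"
  assumes "two_category K"
    and "H \<subseteq> arr K"
    and "\<forall>f \<in> H. corep_surj K f"
  shows "(\<forall>X Y g. RInj_obj K H X \<and> RInj_obj K H Y \<and> g \<in> hom1 K X Y \<longrightarrow> RInj_arr K H g)
       \<and> (\<forall>X Y g. LInj_obj K H X \<and> LInj_obj K H Y \<and> g \<in> hom1 K X Y \<longrightarrow> LInj_arr K H g)"
proof (intro conjI allI impI)
  fix X Y g assume a: "RInj_obj K H X \<and> RInj_obj K H Y \<and> g \<in> hom1 K X Y"
  have aX: "RInj_obj K H X" using a by blast
  have aY: "RInj_obj K H Y" using a by blast
  have ag: "g \<in> hom1 K X Y" using a by blast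
  note th = two_category.RInj_arr_main[OF assms(1,2,3)]
  show "RInj_arr K H g" by (rule th[OF aX aY ag])
next
  fix X Y g assume a: "LInj_obj K H X \<and> LInj_obj K H Y \<and> g \<in> hom1 K X Y"
  have aX: "RInj_obj (co2 K) H X" using a by simp
  have aY: "RInj_obj (co2 K) H Y" using a by simp
  have ag: "g \<in> hom1 (co2 K) X Y" using a by simp
  have C: "two_category (co2 K)" by (rule co2_two_category[OF assms(1)])
  have h1: "H \<subseteq> arr (co2 K)" using assms(2) by simp
  have h2: "\<forall>f \<in> H. corep_surj (co2 K) f" using assms(3) by (simp add: co2_corep)
  have "RInj_arr (co2 K) H g" by (rule two_category.RInj_arr_main[OF C h1 h2 aX aY ag])
  then show "LInj_arr K H g" by simp
qed
end
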